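(* Consider the Adaptive Group Lasso degrees-of-freedom estimate $\widehat{df}_\gamma=\mathrm{trace}[(\mathbf I_n+\gamma\mathbf B)^{-1}(\mathbf A-\gamma\mathbf C)]$ (with $\mathbf A,\mathbf B,\mathbf C$ as defined below) for the estimator $\widehat{\boldsymbol\beta}=\arg\min_{\boldsymbol\beta}\tfrac12\|\mathbf y-\mathbf X\boldsymbol\beta\|_2^2+\gamma\sum_g w_g\|\boldsymbol\beta_g\|_2$, $\gamma\in(\gamma_l,\gamma_{l+1})$. Then: (i) if $n_g=1$ for all groups, $\widehat{df}_\gamma$ reduces to the Adaptive Lasso estimate $|\mathcal A|-\gamma\sum_{j\in\mathcal A}\mathrm{sgn}(\widehat\beta_j)\mathrm{sgn}(\widehat\beta^{\mathsf{LS}}_j)\frac{\partial w_j(z)}{\partial z}\big|_{z=\widehat\beta^{\mathsf{LS}}_j}[(\mathbf X_{\mathcal A}^\top\mathbf X_{\mathcal A})^{-1}]_{\pi(j),\pi(j)}$; (ii) if the weights $w_g$ do not depend on $\mathbf y$, then $\mathbf C=\mathbf 0$ and $\widehat{df}_\gamma$ reduces to the Group Lasso estimate $\mathrm{trace}[(\mathbf I_n+\gamma\mathbf B)^{-1}\mathbf A]$; (iii) if both conditions hold, $\widehat{df}_\gamma=|\mathcal A|$ (the Lasso result).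
   Context: Linear model $\mathbf y=\mathbf X\boldsymbol\beta+\boldsymbol\epsilon$, $\widehat{\boldsymbol\beta}^{\mathsf{LS}}=(\mathbf X^\top\mathbf X)^{-1}\mathbf X^\top\mathbf y$; coefficients partitioned into $G$ groups of cardinalities $n_g$; weights $w_g=w_g(\|\widehat{\boldsymbol\beta}^{\mathsf{LS}}_g\|_2)$ with differentiable $w_g$ (derivative $w_g'$). $\mathcal A=\mathcal A_p=\{j:\widehat\beta_j\ne0\}$, $\mathcal A_G=\{g:\|\widehat{\boldsymbol\beta}_g\|_2\ne0\}$; $\mathbf X_{\mathcal A_G}$ the columns of active groups (with invertible Gram matrix), $\mathbf M=\mathbf X_{\mathcal A_G}(\mathbf X_{\mathcal A_G}^\top\mathbf X_{\mathcal A_G})^{-1}$; $\pi(j)$ the position of $j$ in $\mathcal A$. $\boldsymbol\Pi_{\mathcal A_G}=\mathrm{blockdiag}_{g\in\mathcal A_G}\big(w_g[\mathbf I_{n_g}/\|\widehat{\boldsymbol\beta}_g\|_2-\widehat{\boldsymbol\beta}_g\widehat{\boldsymbol\beta}_g^\top/\|\widehat{\boldsymbol\beta}_g\|_2^3]\big)$, $\boldsymbol\Phi_{\mathcal A_G}=\mathrm{blockdiag}_{g\in\mathcal A_G}\big(\frac{\widehat{\boldsymbol\beta}_g}{\|\widehat{\boldsymbol\beta}_g\|_2}w_g'(\|\widehat{\boldsymbol\beta}^{\mathsf{LS}}_g\|_2)\frac{(\widehat{\boldsymbol\beta}^{\mathsf{LS}}_g)^\top}{\|\widehat{\boldsymbol\beta}^{\mathsf{LS}}_g\|_2}\big)$;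 $\mathbf A=\mathbf M\mathbf X_{\mathcal A_G}^\top$, $\mathbf B=\mathbf M\boldsymbol\Pi_{\mathcal A_G}\mathbf M^\top$, $\mathbf C=\mathbf M\boldsymbol\Phi_{\mathcal A_G}\mathbf M^\top$ (for $\mathbf X^\top\mathbf X=\mathbf I_p$, $\mathbf M=\mathbf X_{\mathcal A_G}$). When $n_g=1$ the group index coincides with the variable index $j$ and $w_j(z)$ is the weight function of variable $j$. Transition points are the values of $\gamma>0$ at which the active set changes. *)

theory Defs
  imports Complex_Main "Jordan_Normal_Form.DL_Submatrix" "Jordan_Normal_Form.Gauss_Jordan_Elimination"
begin

definition mtrace :: "real mat \<Rightarrow> real" where
  "mtrace A = (\<Sum>i<dim_row A. A $$ (i,i))"

(* inverse of a square matrix (meaningful when it is invertible) *)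
definition minv :: "real mat \<Rightarrow> real mat" where
  "minv A = the (mat_inverse A)"

(* X_S : the columns of X indexed by S, in increasing order *)
definition cols :: "real mat \<Rightarrow> nat set \<Rightarrow> real mat" where
  "cols X S = submatrix X {..<dim_row X} S"

(* position pi(j) of j in the (increasingly ordered) set S, counting from 0 *)
definition pos :: "nat set \<Rightarrow> nat \<Rightarrow> nat" where
  "pos S j = card {i\<in>S. i < j}"

definition beta_LS :: "real mat \<Rightarrow> real vec \<Rightarrow> real vec" where
  "beta_LS X y = minv (transpose_mat X * X) *\<^sub>v (transpose_mat X *\<^sub>v y)"

(* the variables (indices < p) of group g; grp j is the group of variable j *)
definition grp_set :: "(nat \<Rightarrow> nat) \<Rightarrow> nat \<Rightarrow> nat \<Rightarrow> nat set" where
  "grp_set grp p g = {j. j < p \<and> grp j = g}"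

definition gnorm :: "(nat \<Rightarrow> nat) \<Rightarrow> real vec \<Rightarrow> nat \<Rightarrow> real" where
  "gnorm grp b g = sqrt (\<Sum>j\<in>grp_set grp (dim_vec b) g. (b $ j)^2)"

definition active_vars :: "real vec \<Rightarrow> nat set" where
  "active_vars b = {j. j < dim_vec b \<and> b $ j \<noteq> 0}"

definition active_groups :: "(nat \<Rightarrow> nat) \<Rightarrow> nat \<Rightarrow> real vec \<Rightarrow> nat set" where
  "active_groups grp G b = {g. g < G \<and> gnorm grp b g \<noteq> 0}"

definition active_group_vars :: "(nat \<Rightarrow> nat) \<Rightarrow> nat \<Rightarrow> real vec \<Rightarrow> nat set" where
  "active_group_vars grp G b = {j. j < dim_vec b \<and> grp j \<in> active_groups grp G b}"

definition agl_weight :: "real mat \<Rightarrow> real vec \<Rightarrow> (nat \<Rightarrow> nat) \<Rightarrow> (nat \<Rightarrow> real \<Rightarrow> real) \<Rightarrow> nat \<Rightarrow> real" where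
  "agl_weight X y grp w g = w g (gnorm grp (beta_LS X y) g)"

definition agl_objective :: "real mat \<Rightarrow> real vec \<Rightarrow> (nat \<Rightarrow> nat) \<Rightarrow> nat \<Rightarrow> (nat \<Rightarrow> real \<Rightarrow> real)
    \<Rightarrow> real \<Rightarrow> real vec \<Rightarrow> real" where
  "agl_objective X y grp G w \<gamma> b =
     (let r = y - X *\<^sub>v b in (1/2) * (r \<bullet> r))
     + \<gamma> * (\<Sum>g<G. agl_weight X y grp w g * gnorm grp b g)"

definition agl_M :: "real mat \<Rightarrow> (nat \<Rightarrow> nat) \<Rightarrow> nat \<Rightarrow> real vec \<Rightarrow> real mat" where
  "agl_M X grp G b = (let XA = cols X (active_group_vars grp G b) in
      XA * minv (transpose_mat XA * XA))"

(* Pi_{A_G}: block diagonal over active groups (blocks ordered consistently with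
   the columns of X_{A_G}); entry (a,c) refers to variables pick S a, pick S c *)
definition agl_Pi :: "real mat \<Rightarrow> real vec \<Rightarrow> (nat \<Rightarrow> nat) \<Rightarrow> nat \<Rightarrow> (nat \<Rightarrow> real \<Rightarrow> real)
    \<Rightarrow> real vec \<Rightarrow> real mat" where
  "agl_Pi X y grp G w b = (let S = active_group_vars grp G b in
     mat (card S) (card S) (\<lambda>(a,c).
       let ja = pick S a; jc = pick S c; g = grp ja; N = gnorm grp b g in
       if grp jc = g then
         agl_weight X y grp w g * ((if a = c then 1 else 0) / N - (b $ ja) * (b $ jc) / N^3)
       else 0))"

definition agl_Phi :: "real mat \<Rightarrow> real vec \<Rightarrow> (nat \<Rightarrow> nat) \<Rightarrow> nat \<Rightarrow> (nat \<Rightarrow> real \<Rightarrow> real)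
    \<Rightarrow> real vec \<Rightarrow> real mat" where
  "agl_Phi X y grp G w' b = (let S = active_group_vars grp G b; bLS = beta_LS X y in
     mat (card S) (card S) (\<lambda>(a,c).
       let ja = pick S a; jc = pick S c; g = grp ja;
           N = gnorm grp b g; NLS = gnorm grp bLS g in
       if grp jc = g then
         ((b $ ja) / N) * w' g NLS * ((bLS $ jc) / NLS)
       else 0))"

definition agl_A :: "real mat \<Rightarrow> (nat \<Rightarrow> nat) \<Rightarrow> nat \<Rightarrow> real vec \<Rightarrow> real mat" where
  "agl_A X grp G b = agl_M X grp G b * transpose_mat (cols X (active_group_vars grp G b))"

definition agl_B :: "real mat \<Rightarrow> real vec \<Rightarrow> (nat \<Rightarrow> nat) \<Rightarrow> nat \<Rightarrow> (nat \<Rightarrow> real \<Rightarrow> real)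
    \<Rightarrow> real vec \<Rightarrow> real mat" where
  "agl_B X y grp G w b = agl_M X grp G b * agl_Pi X y grp G w b * transpose_mat (agl_M X grp G b)"

definition agl_C :: "real mat \<Rightarrow> real vec \<Rightarrow> (nat \<Rightarrow> nat) \<Rightarrow> nat \<Rightarrow> (nat \<Rightarrow> real \<Rightarrow> real)
    \<Rightarrow> real vec \<Rightarrow> real mat" where
  "agl_C X y grp G w' b = agl_M X grp G b * agl_Phi X y grp G w' b * transpose_mat (agl_M X grp G b)"

definition agl_df :: "real mat \<Rightarrow> real vec \<Rightarrow> (nat \<Rightarrow> nat) \<Rightarrow> nat \<Rightarrow> (nat \<Rightarrow> real \<Rightarrow> real)
    \<Rightarrow> (nat \<Rightarrow> real \<Rightarrow> real) \<Rightarrow> real \<Rightarrow> real vec \<Rightarrow> real" where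
  "agl_df X y grp G w w' \<gamma> b =
     mtrace (minv (1\<^sub>m (dim_row X) + \<gamma> \<cdot>\<^sub>m agl_B X y grp G w b)
             * (agl_A X grp G b - \<gamma> \<cdot>\<^sub>m agl_C X y grp G w' b))"

end

theory Submission
  imports Defs
begin


lemma minv_props:
  assumes inv: "invertible_mat A" and A: "A \<in> carrier_mat k k"
  shows "A * minv A = 1\<^sub>m k" "minv A * A = 1\<^sub>m k" "minv A \<in> carrier_mat k k"
proof -
  from inv obtain B where AB: "A * B = 1\<^sub>m (dim_row A)" and BA: "B * A = 1\<^sub>m (dim_row B)"
    unfolding invertible_mat_def inverts_mat_def by blast
  have Bc: "B \<in> carrier_mat k k"
  proof -
    have "dim_col B = k" using arg_cong[OF AB, of dim_col] A by simp
    moreover have "dim_row B = k" using arg_cong[OF BA, of dim_col] A by simp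
    ultimately show ?thesis by auto
  qed
  have U: "A \<in> Units (ring_mat TYPE(real) k ())"
    unfolding Units_def ring_mat_def using A Bc AB BA by auto
  have "mat_inverse A \<noteq> None" using mat_inverse(1)[OF A, where b="()"] U by blast
  then obtain C where C: "mat_inverse A = Some C" by auto
  hence "minv A = C" unfolding minv_def by simp
  with mat_inverse(2)[OF A C] show "A * minv A = 1\<^sub>m k" "minv A * A = 1\<^sub>m k" "minv A \<in> carrier_mat k k"
    by auto
qed

lemma minv_one: "minv (1\<^sub>m k) = 1\<^sub>m k"
proof -
  have "invertible_mat (1\<^sub>m k :: real mat)"
    unfolding invertible_mat_def inverts_mat_def square_mat.simps by (auto intro!: exI[of _ "1\<^sub>m k"])
  from minv_props[OF this one_carrier_mat] show ?thesis
    by (metis left_mult_one_mat)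
qed

lemma mtrace_comm:
  assumes A: "A \<in> carrier_mat n m" and B: "B \<in> carrier_mat m n"
  shows "mtrace (A * B) = mtrace (B * A)"
proof -
  have "mtrace (A * B) = (\<Sum>i<n. \<Sum>k<m. A $$ (i,k) * B $$ (k,i))"
    unfolding mtrace_def using A B
    by (auto simp: scalar_prod_def lessThan_atLeast0 intro!: sum.cong)
  also have "\<dots> = (\<Sum>k<m. \<Sum>i<n. B $$ (k,i) * A $$ (i,k))"
    by (subst sum.swap) (simp add: mult.commute)
  also have "\<dots> = mtrace (B * A)"
    unfolding mtrace_def using A B
    by (auto simp: scalar_prod_def lessThan_atLeast0 intro!: sum.cong)
  finally show ?thesis .
qed

lemma mtrace_one: "mtrace (1\<^sub>m k) = real k"
  unfolding mtrace_def by simp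

lemma mtrace_minus_smult:
  assumes A: "A \<in> carrier_mat n n" and C: "C \<in> carrier_mat n n"
  shows "mtrace (A - g \<cdot>\<^sub>m C) = mtrace A - g * mtrace C"
  unfolding mtrace_def using A C by (simp add: sum_subtractf sum_distrib_left)



lemma pick_pos_facts:
  assumes "finite S"
  shows "\<And>a. a < card S \<Longrightarrow> pick S a \<in> S \<and> pos S (pick S a) = a"
    and "\<And>j. j \<in> S \<Longrightarrow> pick S (pos S j) = j \<and> pos S j < card S"
proof -
  fix a assume "a < card S"
  thus "pick S a \<in> S \<and> pos S (pick S a) = a" unfolding pos_def
    using pick_in_set_le card_pick_le by blast
next
  fix j assume j: "j \<in> S"
  have "{i\<in>S. i < j} \<subset> S" using j by auto
  hence "pos S j < card S" unfolding pos_def using assms psubset_card_mono by blast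
  thus "pick S (pos S j) = j \<and> pos S j < card S" unfolding pos_def using pick_card_in_set[OF j] by simp
qed

lemma sing_grp_set:
  assumes sing: "\<forall>g<G. card (grp_set grp p g) = 1" and rng: "\<forall>j<p. grp j < G" and j: "j < p"
  shows "grp_set grp p (grp j) = {j}"
proof -
  have "card (grp_set grp p (grp j)) = 1" using sing rng j by auto
  then obtain x where x: "grp_set grp p (grp j) = {x}" by (rule card_1_singletonE)
  have "j \<in> grp_set grp p (grp j)" using j unfolding grp_set_def by auto
  thus ?thesis using x by auto
qed

lemma sing_gnorm:
  assumes sing: "\<forall>g<G. card (grp_set grp p g) = 1" and rng: "\<forall>j<p. grp j < G" and j: "j < p"
    and v: "dim_vec v = p"
  shows "gnorm grp v (grp j) = \<bar>v $ j\<bar>"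
  unfolding gnorm_def v sing_grp_set[OF sing rng j] by simp

lemma sing_grp_eq:
  assumes sing: "\<forall>g<G. card (grp_set grp p g) = 1" and rng: "\<forall>j<p. grp j < G"
    and j: "j < p" and i: "i < p" and e: "grp i = grp j"
  shows "i = j"
proof -
  have "i \<in> grp_set grp p (grp j)" using i e unfolding grp_set_def by auto
  thus ?thesis using sing_grp_set[OF sing rng j] by auto
qed

lemma const_deriv_zero:
  assumes c: "\<forall>z>0. f z = (c::real)" and d: "(f has_real_derivative d) (at z)" and z: "z > 0"
  shows "d = 0"
proof -
  have "((\<lambda>_. c) has_real_derivative 0) (at z)" by simp
  hence "(f has_real_derivative 0) (at z)"
    by (rule has_field_derivative_transform_within_open[where S="{0<..}"]) (use c z in auto)
  thus ?thesis using d DERIV_unique by blast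
qed



theorem corollaryS7:
  fixes X :: "real mat" and y :: "real vec" and n p G :: nat and grp :: "nat \<Rightarrow> nat"
    and w w' :: "nat \<Rightarrow> real \<Rightarrow> real" and betahat :: "real \<Rightarrow> real vec"
    and \<gamma> \<gamma>l \<gamma>u :: real
  assumes X: "X \<in> carrier_mat n p" and y: "y \<in> carrier_vec n"
    and XtX: "invertible_mat (transpose_mat X * X)"
    and grp_range: "\<forall>j<p. grp j < G"
    and grp_nonempty: "\<forall>g<G. \<exists>j<p. grp j = g"
    and w_deriv: "\<forall>g<G. \<forall>z>0. (w g has_real_derivative w' g z) (at z)"
    and estimator: "\<forall>\<gamma>'>0. betahat \<gamma>' \<in> carrier_vec p \<and>
        (\<forall>b\<in>carrier_vec p. agl_objective X y grp G w \<gamma>' (betahat \<gamma>')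
                             \<le> agl_objective X y grp G w \<gamma>' b)"
    and interval: "0 < \<gamma>l" "\<gamma>l < \<gamma>" "\<gamma> < \<gamma>u"
    and no_transition: "\<forall>\<gamma>'\<in>{\<gamma>l<..<\<gamma>u}.
        active_groups grp G (betahat \<gamma>') = active_groups grp G (betahat \<gamma>)"
    and gram_inv: "invertible_mat
        (transpose_mat (cols X (active_group_vars grp G (betahat \<gamma>)))
         * cols X (active_group_vars grp G (betahat \<gamma>)))"
  shows
    "((\<forall>g<G. card (grp_set grp p g) = 1) \<longrightarrow>
        agl_df X y grp G w w' \<gamma> (betahat \<gamma>) =
          real (card (active_vars (betahat \<gamma>)))
          - \<gamma> * (\<Sum>j\<in>active_vars (betahat \<gamma>).
                sgn (betahat \<gamma> $ j) * sgn (beta_LS X y $ j)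
                * w' (grp j) \<bar>beta_LS X y $ j\<bar>
                * minv (transpose_mat (cols X (active_vars (betahat \<gamma>)))
                        * cols X (active_vars (betahat \<gamma>)))
                  $$ (pos (active_vars (betahat \<gamma>)) j, pos (active_vars (betahat \<gamma>)) j)))
     \<and> ((\<forall>g<G. \<exists>c. \<forall>z>0. w g z = c) \<longrightarrow>
        agl_C X y grp G w' (betahat \<gamma>) = 0\<^sub>m n n \<and>
        agl_df X y grp G w w' \<gamma> (betahat \<gamma>) =
          mtrace (minv (1\<^sub>m n + \<gamma> \<cdot>\<^sub>m agl_B X y grp G w (betahat \<gamma>))
                  * agl_A X grp G (betahat \<gamma>)))
     \<and> ((\<forall>g<G. card (grp_set grp p g) = 1) \<and> (\<forall>g<G. \<exists>c. \<forall>z>0. w g z = c) \<longrightarrow>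
        agl_df X y grp G w w' \<gamma> (betahat \<gamma>) = real (card (active_vars (betahat \<gamma>))))"
proof -
  define b where "b = betahat \<gamma>"
  have gpos: "\<gamma> > 0" using interval by simp
  have bc: "b \<in> carrier_vec p" using conjunct1[OF estimator[rule_format, OF gpos]] unfolding b_def .
  define S where "S = active_group_vars grp G b"
  have Ssub: "S \<subseteq> {..<p}" unfolding S_def active_group_vars_def using bc by auto
  have finS: "finite S" using Ssub finite_subset by blast
  define k where "k = card S"
  define XA where "XA = cols X S"
  have XAc: "XA \<in> carrier_mat n k"
  proof -
    have "{i. i < n \<and> i \<in> {..<n}} = {..<n}" by auto
    moreover have "{j. j < p \<and> j \<in> S} = S" using Ssub by auto
    moreover have "dim_row X = n" "dim_col X = p" using X by auto
    ultimately show ?thesis unfolding XA_def cols_def k_def carrier_mat_def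
      by (simp add: dim_submatrix)
  qed
  define Gm where "Gm = transpose_mat XA * XA"
  have Gmc: "Gm \<in> carrier_mat k k" unfolding Gm_def using XAc by auto
  have Gminv: "invertible_mat Gm" using gram_inv unfolding Gm_def XA_def S_def b_def .
  define Gi where "Gi = minv Gm"
  note Gi = minv_props[OF Gminv Gmc, folded Gi_def]
  define M where "M = XA * Gi"
  have Mc: "M \<in> carrier_mat n k" unfolding M_def using XAc Gi by auto
  have Mdef: "agl_M X grp G b = M" unfolding agl_M_def M_def Gi_def Gm_def XA_def S_def Let_def ..
  have Adef: "agl_A X grp G b = M * transpose_mat XA" unfolding agl_A_def Mdef XA_def S_def ..
  have Ac: "M * transpose_mat XA \<in> carrier_mat n n" using Mc XAc by auto
  have trA: "mtrace (agl_A X grp G b) = real k"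
  proof -
    have "M * transpose_mat XA = XA * (Gi * transpose_mat XA)"
      unfolding M_def using XAc Gi by (auto intro: assoc_mult_mat)
    hence "mtrace (M * transpose_mat XA) = mtrace ((Gi * transpose_mat XA) * XA)"
      using mtrace_comm[OF XAc, of "Gi * transpose_mat XA"] XAc Gi by auto
    also have "(Gi * transpose_mat XA) * XA = Gi * Gm"
      unfolding Gm_def using XAc Gi by (auto intro: assoc_mult_mat)
    also have "\<dots> = 1\<^sub>m k" using Gi by simp
    finally show ?thesis using Adef mtrace_one by simp
  qed
  have dimX: "dim_row X = n" using X by auto
  have Phic: "agl_Phi X y grp G w' b \<in> carrier_mat k k"
    unfolding agl_Phi_def Let_def S_def[symmetric] k_def by simp
  have Pic: "agl_Pi X y grp G w b \<in> carrier_mat k k"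
    unfolding agl_Pi_def Let_def S_def[symmetric] k_def by simp
  have Cdef: "agl_C X y grp G w' b = M * agl_Phi X y grp G w' b * transpose_mat M"
    unfolding agl_C_def Mdef ..
  have Bdef: "agl_B X y grp G w b = M * agl_Pi X y grp G w b * transpose_mat M"
    unfolding agl_B_def Mdef ..
  have inS: "\<And>a. a < k \<Longrightarrow> pick S a \<in> S \<and> pos S (pick S a) = a"
    using pick_pos_facts(1)[OF finS] unfolding k_def by blast
  have grpS: "\<And>j. j \<in> S \<Longrightarrow> grp j < G \<and> j < p \<and> gnorm grp b (grp j) \<noteq> 0"
    unfolding S_def active_group_vars_def active_groups_def using bc by auto
  have partii: "(\<forall>g<G. \<exists>c. \<forall>z>0. w g z = c) \<longrightarrow>
        agl_C X y grp G w' b = 0\<^sub>m n n \<and>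
        agl_df X y grp G w w' \<gamma> b =
          mtrace (minv (1\<^sub>m n + \<gamma> \<cdot>\<^sub>m agl_B X y grp G w b) * agl_A X grp G b)"
  proof
    assume cst: "\<forall>g<G. \<exists>c. \<forall>z>0. w g z = c"
    have Phi0: "agl_Phi X y grp G w' b = 0\<^sub>m k k"
    proof (rule eq_matI)
      fix a c assume a: "a < dim_row (0\<^sub>m k k :: real mat)" and c: "c < dim_col (0\<^sub>m k k :: real mat)"
      define g where "g = grp (pick S a)"
      have gG: "g < G" using inS[of a] a grpS unfolding g_def by auto
      define NLS where "NLS = gnorm grp (beta_LS X y) g"
      have "w' g NLS * ((beta_LS X y $ pick S c) / NLS) = 0"
      proof (cases "NLS = 0")
        case False
        moreover have "NLS \<ge> 0" unfolding NLS_def gnorm_def by (simp add: sum_nonneg)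
        ultimately have "NLS > 0" by linarith
        moreover obtain cc where "\<forall>z>0. w g z = cc" using cst gG by blast
        ultimately have "w' g NLS = 0" using const_deriv_zero w_deriv gG by blast
        thus ?thesis by simp
      qed simp
      thus "agl_Phi X y grp G w' b $$ (a, c) = 0\<^sub>m k k $$ (a, c)"
        using a c unfolding agl_Phi_def Let_def S_def[symmetric] k_def[symmetric]
        by (auto simp: g_def[symmetric] NLS_def[symmetric])
    qed (use Phic in auto)
    have C0: "agl_C X y grp G w' b = 0\<^sub>m n n"
      unfolding Cdef Phi0 using Mc by simp
    have "agl_A X grp G b - \<gamma> \<cdot>\<^sub>m agl_C X y grp G w' b = agl_A X grp G b"
      unfolding C0 Adef using Ac Mc XAc by (intro eq_matI) auto
    thus "agl_C X y grp G w' b = 0\<^sub>m n n \<and>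
        agl_df X y grp G w w' \<gamma> b =
          mtrace (minv (1\<^sub>m n + \<gamma> \<cdot>\<^sub>m agl_B X y grp G w b) * agl_A X grp G b)"
      using C0 unfolding agl_df_def dimX by simp
  qed
  have dimX2: "dim_col X = p" using X by auto
  have XtXc: "transpose_mat X * X \<in> carrier_mat p p" using X by auto
  have bLSdim: "dim_vec (beta_LS X y) = p"
    unfolding beta_LS_def using minv_props(3)[OF XtX XtXc] by simp
  have bdim: "dim_vec b = p" using bc by auto
  have pickinj: "\<And>a c. a < k \<Longrightarrow> c < k \<Longrightarrow> pick S a = pick S c \<Longrightarrow> a = c"
    using inS by metis
  have Mt: "transpose_mat M * M = transpose_mat Gi"
  proof -
    have "transpose_mat M = transpose_mat Gi * transpose_mat XA"
      unfolding M_def using XAc Gi by (simp add: transpose_mult)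
    hence "transpose_mat M * M = transpose_mat Gi * (transpose_mat XA * (XA * Gi))"
      unfolding M_def using XAc Gi by (simp add: assoc_mult_mat[of _ k k _ n _ k])
    also have "transpose_mat XA * (XA * Gi) = Gm * Gi"
      unfolding Gm_def using XAc Gi by (simp add: assoc_mult_mat[of _ k n _ k _ k])
    also have "\<dots> = 1\<^sub>m k" using Gi by simp
    finally show ?thesis using Gi by simp
  qed
  have parti: "(\<forall>g<G. card (grp_set grp p g) = 1) \<longrightarrow>
        agl_df X y grp G w w' \<gamma> b =
          real (card (active_vars b))
          - \<gamma> * (\<Sum>j\<in>active_vars b.
                sgn (b $ j) * sgn (beta_LS X y $ j)
                * w' (grp j) \<bar>beta_LS X y $ j\<bar>
                * minv (transpose_mat (cols X (active_vars b))
                        * cols X (active_vars b))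
                  $$ (pos (active_vars b) j, pos (active_vars b) j))"
  proof
    assume sing: "\<forall>g<G. card (grp_set grp p g) = 1"
    have Seq: "active_vars b = S"
    proof -
      have "j \<in> S \<longleftrightarrow> j \<in> active_vars b" for j
      proof (cases "j < p")
        case True
        then show ?thesis unfolding S_def active_group_vars_def active_groups_def active_vars_def
          using sing_gnorm[OF sing grp_range True bdim] grp_range bdim by auto
      qed (use Ssub bdim active_vars_def in auto)
      thus ?thesis by blast
    qed
    have Pi0: "agl_Pi X y grp G w b = 0\<^sub>m k k"
    proof (rule eq_matI)
      fix a c assume a: "a < dim_row (0\<^sub>m k k :: real mat)" and c: "c < dim_col (0\<^sub>m k k :: real mat)"
      define ja where "ja = pick S a"
      define jc where "jc = pick S c"
      have ja: "ja \<in> S" "jc \<in> S" using inS a c unfolding ja_def jc_def by auto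
      have jap: "ja < p" "jc < p" using ja Ssub by auto
      have val: "agl_weight X y grp w (grp ja) * ((if a = c then 1 else 0) / gnorm grp b (grp ja)
                 - (b $ ja) * (b $ jc) / (gnorm grp b (grp ja))^3) = 0" if e: "grp jc = grp ja"
      proof -
        have "jc = ja" using sing_grp_eq[OF sing grp_range jap(1) jap(2)] e by simp
        hence ac: "a = c" using pickinj a c unfolding ja_def jc_def by auto
        have N: "gnorm grp b (grp ja) = \<bar>b $ ja\<bar>" using sing_gnorm[OF sing grp_range jap(1) bdim] .
        have nz: "b $ ja \<noteq> 0" using grpS[OF ja(1)] N by simp
        have "1 / \<bar>b $ ja\<bar> - b $ ja * b $ ja / \<bar>b $ ja\<bar> ^ 3 = 0"
        proof -
          have "b $ ja * b $ ja = \<bar>b $ ja\<bar> * \<bar>b $ ja\<bar>" by (simp add: abs_mult_self_eq)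
          thus ?thesis using nz by (simp add: power3_eq_cube field_simps)
        qed
        thus ?thesis using ac N \<open>jc = ja\<close> by simp
      qed
      show "agl_Pi X y grp G w b $$ (a, c) = 0\<^sub>m k k $$ (a, c)"
        using a c val unfolding agl_Pi_def Let_def S_def[symmetric] k_def[symmetric]
        by (auto simp: ja_def[symmetric] jc_def[symmetric])
    qed (use Pic in auto)
    have B0: "agl_B X y grp G w b = 0\<^sub>m n n" unfolding Bdef Pi0 using Mc by simp
    have Cc: "agl_C X y grp G w' b \<in> carrier_mat n n" unfolding Cdef using Mc Phic by auto
    have "1\<^sub>m n + \<gamma> \<cdot>\<^sub>m agl_B X y grp G w b = 1\<^sub>m n" unfolding B0 by (intro eq_matI) auto
    hence df1: "agl_df X y grp G w w' \<gamma> b = mtrace (agl_A X grp G b - \<gamma> \<cdot>\<^sub>m agl_C X y grp G w' b)"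
    proof -
      have "agl_A X grp G b - \<gamma> \<cdot>\<^sub>m agl_C X y grp G w' b \<in> carrier_mat n n"
        using Adef Ac Cc by (simp add: minus_carrier_mat)
      note l1 = left_mult_one_mat[OF this]
      thus ?thesis unfolding agl_df_def dimX using \<open>1\<^sub>m n + \<gamma> \<cdot>\<^sub>m agl_B X y grp G w b = 1\<^sub>m n\<close>
        by (simp add: minv_one l1)
    qed
    have df2: "agl_df X y grp G w w' \<gamma> b = real k - \<gamma> * mtrace (agl_C X y grp G w' b)"
      unfolding df1 using mtrace_minus_smult[OF _ Cc, of "agl_A X grp G b"] Adef Ac trA by simp
    define Phi where "Phi = agl_Phi X y grp G w' b"
    have Phioff: "Phi $$ (c, a) = 0" if "a < k" "c < k" "c \<noteq> a" for a c
    proof -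
      have "grp (pick S a) \<noteq> grp (pick S c)"
        using sing_grp_eq[OF sing grp_range] inS Ssub that pickinj by (metis lessThan_iff subsetD)
      thus ?thesis using that unfolding Phi_def agl_Phi_def Let_def S_def[symmetric] k_def[symmetric] by simp
    qed
    have trC: "mtrace (agl_C X y grp G w' b) = (\<Sum>a<k. Phi $$ (a,a) * Gi $$ (a,a))"
    proof -
      have "mtrace (agl_C X y grp G w' b) = mtrace ((M * Phi) * transpose_mat M)"
        unfolding Cdef Phi_def ..
      also have "\<dots> = mtrace (transpose_mat M * (M * Phi))"
        by (rule mtrace_comm[of _ n k]) (use Mc Phic Phi_def in auto)
      also have "transpose_mat M * (M * Phi) = transpose_mat Gi * Phi"
        using Mt Mc Phic unfolding Phi_def by (simp add: assoc_mult_mat[of _ k n _ k _ k, symmetric])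
      also have "mtrace (transpose_mat Gi * Phi) = (\<Sum>a<k. \<Sum>c<k. Gi $$ (c,a) * Phi $$ (c,a))"
        unfolding mtrace_def using Gi Phic Phi_def
        by (auto simp: scalar_prod_def lessThan_atLeast0 intro!: sum.cong)
      also have "\<dots> = (\<Sum>a<k. Phi $$ (a,a) * Gi $$ (a,a))"
      proof (rule sum.cong[OF refl])
        fix a assume a: "a \<in> {..<k}"
        have "(\<Sum>c<k. Gi $$ (c,a) * Phi $$ (c,a)) = (\<Sum>c<k. if c = a then Gi $$ (a,a) * Phi $$ (a,a) else 0)"
          using Phioff a by (intro sum.cong) auto
        also have "\<dots> = Phi $$ (a,a) * Gi $$ (a,a)" using a by simp
        finally show "(\<Sum>c<k. Gi $$ (c,a) * Phi $$ (c,a)) = Phi $$ (a,a) * Gi $$ (a,a)" .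
      qed
      finally show ?thesis .
    qed
    define f where "f j = sgn (b $ j) * sgn (beta_LS X y $ j) * w' (grp j) \<bar>beta_LS X y $ j\<bar>
                * Gi $$ (pos S j, pos S j)" for j
    have bij: "bij_betw (pick S) {..<k} S"
      unfolding bij_betw_def
    proof
      show "inj_on (pick S) {..<k}" using pickinj by (auto intro: inj_onI)
      show "pick S ` {..<k} = S"
      proof
        show "pick S ` {..<k} \<subseteq> S" using inS by auto
        show "S \<subseteq> pick S ` {..<k}"
        proof
          fix j assume "j \<in> S"
          with pick_pos_facts(2)[OF finS] show "j \<in> pick S ` {..<k}" unfolding k_def
            by (metis image_eqI lessThan_iff)
        qed
      qed
    qed
    have sumeq: "(\<Sum>j\<in>S. f j) = (\<Sum>a<k. Phi $$ (a,a) * Gi $$ (a,a))"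
    proof -
      have "(\<Sum>j\<in>S. f j) = (\<Sum>a<k. f (pick S a))" using sum.reindex_bij_betw[OF bij, of f] by simp
      also have "\<dots> = (\<Sum>a<k. Phi $$ (a,a) * Gi $$ (a,a))"
      proof (rule sum.cong[OF refl])
        fix a assume a: "a \<in> {..<k}"
        define j where "j = pick S a"
        have j: "j \<in> S" "pos S j = a" using inS a unfolding j_def by auto
        have jp: "j < p" using j Ssub by auto
        have N: "gnorm grp b (grp j) = \<bar>b $ j\<bar>" using sing_gnorm[OF sing grp_range jp bdim] .
        have NLS: "gnorm grp (beta_LS X y) (grp j) = \<bar>beta_LS X y $ j\<bar>"
          using sing_gnorm[OF sing grp_range jp bLSdim] .
        have "Phi $$ (a,a) = (b $ j / \<bar>b $ j\<bar>) * w' (grp j) \<bar>beta_LS X y $ j\<bar>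
              * (beta_LS X y $ j / \<bar>beta_LS X y $ j\<bar>)"
          using a N NLS unfolding Phi_def agl_Phi_def Let_def S_def[symmetric] k_def[symmetric] j_def
          by simp
        also have "\<dots> = sgn (b $ j) * sgn (beta_LS X y $ j) * w' (grp j) \<bar>beta_LS X y $ j\<bar>"
          by (simp add: real_sgn_eq)
        finally show "f (pick S a) = Phi $$ (a,a) * Gi $$ (a,a)"
          unfolding f_def j_def[symmetric] using j by simp
      qed
      finally show ?thesis .
    qed
    show "agl_df X y grp G w w' \<gamma> b =
          real (card (active_vars b))
          - \<gamma> * (\<Sum>j\<in>active_vars b.
                sgn (b $ j) * sgn (beta_LS X y $ j)
                * w' (grp j) \<bar>beta_LS X y $ j\<bar>
                * minv (transpose_mat (cols X (active_vars b))
                        * cols X (active_vars b))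
                  $$ (pos (active_vars b) j, pos (active_vars b) j))"
      unfolding Seq df2 trC sumeq[symmetric] by (simp add: f_def k_def Gi_def Gm_def XA_def)
  qed
  have partiii: "(\<forall>g<G. card (grp_set grp p g) = 1) \<and> (\<forall>g<G. \<exists>c. \<forall>z>0. w g z = c) \<longrightarrow>
        agl_df X y grp G w w' \<gamma> b = real (card (active_vars b))"
  proof
    assume h: "(\<forall>g<G. card (grp_set grp p g) = 1) \<and> (\<forall>g<G. \<exists>c. \<forall>z>0. w g z = c)"
    have z: "sgn (b $ j) * sgn (beta_LS X y $ j)
                * w' (grp j) \<bar>beta_LS X y $ j\<bar>
                * minv (transpose_mat (cols X (active_vars b))
                        * cols X (active_vars b))
                  $$ (pos (active_vars b) j, pos (active_vars b) j) = 0"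
      if j: "j \<in> active_vars b" for j
    proof (cases "beta_LS X y $ j = 0")
      case False
      have gG: "grp j < G" using j grp_range bdim unfolding active_vars_def by auto
      obtain cc where "\<forall>z>0. w (grp j) z = cc" using h gG by blast
      moreover have "(w (grp j) has_real_derivative w' (grp j) \<bar>beta_LS X y $ j\<bar>) (at \<bar>beta_LS X y $ j\<bar>)"
        using w_deriv gG False by simp
      ultimately have "w' (grp j) \<bar>beta_LS X y $ j\<bar> = 0"
        using const_deriv_zero False by simp
      thus ?thesis by simp
    qed simp
    show "agl_df X y grp G w w' \<gamma> b = real (card (active_vars b))"
      using parti h z by simp
  qed
  show ?thesis using parti partii partiii unfolding b_def by blast
qed

end
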